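(* Let $p$ be a non-negative integer. For any integer $m$ and $-\pi<\arg\zeta<\pi$, $$S_{-2p-1,0}(\zeta\mathrm{e}^{-m\pi i})=S_{-2p-1,0}(\zeta)+\frac{(-1)^pK''_+}{2^{2p}(p!)^2}H^{(1)}_0(\zeta)+\frac{(-1)^pK''_-}{2^{2p}(p!)^2}H^{(2)}_0(\zeta),\qquad K''_\pm=-\frac{m\pi^2(m\pm1)}{4}.$$
   Context: $J_0,Y_0$ are Bessel functions of order $0$, $H^{(1)}_0=J_0+iY_0$, $H^{(2)}_0=J_0-iY_0$, $\psi=\Gamma'/\Gamma$, $(a)_k=a(a+1)\cdots(a+k-1)$. Lommel functions: $S_{-1,0}(\zeta)=\frac12\sum_{k\ge0}\frac{(-1)^k(\zeta/2)^{2k}}{(k!)^2}\big\{[\log\frac{\zeta}{2}-\psi(k+1)]^2-\frac12\psi'(k+1)+\frac{\pi^2}{4}\big\}$ and $S_{-2p-1,0}(\zeta)=\sum_{j=0}^{p-1}\frac{(-1)^j\zeta^{-2p+2j}}{2^{2j+2}(-p)_{j+1}(-p)_{j+1}}+\frac{(-1)^pS_{-1,0}(\zeta)}{2^{2p}(p!)^2}$. Right-hand side functions are on the principal branch $-\pi<\arg\zeta<\pi$; $g(\zeta\mathrm{e}^{-m\pi i})$ is the value of the analytic continuation of the principal branch at the point over $\zeta$ with argument $\arg\zeta-m\pi$. *)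

theory Defs
  imports "HOL-Analysis.Analysis"
begin

(* Principal branches (complex logarithm Ln: -pi < Im (Ln z) <= pi); used for -pi < arg z < pi. *)

definition besselJ0 :: "complex \<Rightarrow> complex" where
  "besselJ0 z = (\<Sum>k. (-1) ^ k * (z / 2) ^ (2 * k) / (of_nat (fact k)) ^ 2)"

definition besselY0 :: "complex \<Rightarrow> complex" where
  "besselY0 z = (2 / complex_of_real pi) *
     (\<Sum>k. (-1) ^ k * (z / 2) ^ (2 * k) / (of_nat (fact k)) ^ 2
            * (Ln (z / 2) - Digamma (of_nat (k + 1))))"

definition hankel1_0 :: "complex \<Rightarrow> complex" where
  "hankel1_0 z = besselJ0 z + \<i> * besselY0 z"

definition hankel2_0 :: "complex \<Rightarrow> complex" where
  "hankel2_0 z = besselJ0 z - \<i> * besselY0 z"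

definition lommelS_m1 :: "complex \<Rightarrow> complex" where
  "lommelS_m1 z = (1/2) * (\<Sum>k. (-1) ^ k * (z / 2) ^ (2 * k) / (of_nat (fact k)) ^ 2
      * ((Ln (z / 2) - Digamma (of_nat (k + 1))) ^ 2
         - (1/2) * Polygamma 1 (of_nat (k + 1)) + (complex_of_real pi) ^ 2 / 4))"

definition lommelS :: "nat \<Rightarrow> complex \<Rightarrow> complex" where
  "lommelS p z =
     (\<Sum>j<p. (-1) ^ j * z powi (2 * int j - 2 * int p)
          / (2 ^ (2 * j + 2) * pochhammer (- of_nat p) (j + 1) * pochhammer (- of_nat p) (j + 1)))
     + (-1) ^ p * lommelS_m1 z / (2 ^ (2 * p) * (of_nat (fact p)) ^ 2)"

(* F is an analytic continuation of the principal branch of g to the logarithmic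
   Riemann surface, parametrised by w (the point exp w with argument Im w). *)
definition log_continuation :: "(complex \<Rightarrow> complex) \<Rightarrow> (complex \<Rightarrow> complex) \<Rightarrow> bool" where
  "log_continuation g F \<longleftrightarrow> F holomorphic_on UNIV \<and>
      (\<forall>w. \<bar>Im w\<bar> < pi \<longrightarrow> F w = g (exp w))"

end

theory Submission
  imports Defs "HOL-Complex_Analysis.Complex_Analysis"
begin


definition cf :: "(nat \<Rightarrow> complex) \<Rightarrow> nat \<Rightarrow> complex" where
  "cf d k = (-1)^k / (4^k * (of_nat (fact k))^2) * d k"

definition ser :: "(nat \<Rightarrow> complex) \<Rightarrow> complex \<Rightarrow> complex" where
  "ser d z = (\<Sum>k. (-1) ^ k * (z / 2) ^ (2 * k) / (of_nat (fact k)) ^ 2 * d k)"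

lemma term_eq: "(-1) ^ k * (z / 2) ^ (2 * k) / (of_nat (fact k)) ^ 2 * d k = cf d k * (z^2)^k"
proof -
  have "(z / 2) ^ (2 * k) = (z^2)^k / 4^k"
    by (simp add: power_mult power_divide)
  then show ?thesis by (simp add: cf_def)
qed

lemma cf_summable:
  assumes "\<And>k. norm (d k) \<le> M * 4^k"
  shows "summable (\<lambda>k. cf d k * u^k)"
proof (rule summable_comparison_test)
  have "norm (d 0) \<le> M" using assms[of 0] by simp
  then have M: "0 \<le> M" by (meson norm_ge_zero order_trans)
  show "summable (\<lambda>k. M * (inverse (fact k) * norm u ^ k))"
    by (intro summable_mult summable_exp)
  show "\<exists>N. \<forall>n\<ge>N. norm (cf d n * u ^ n) \<le> M * (inverse (fact n) * norm u ^ n)"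
  proof (intro exI allI impI)
    fix n :: nat
    have f1: "(1::real) \<le> fact n" by simp
    have "norm (cf d n * u ^ n) = norm (d n) * norm u ^ n / (4^n * (fact n)^2)"
      by (simp add: cf_def norm_mult norm_divide norm_power)
    also have "\<dots> \<le> M * 4^n * norm u ^ n / (4^n * (fact n)^2)"
      by (intro divide_right_mono mult_right_mono assms) auto
    also have "\<dots> = M * norm u ^ n / (fact n)^2" by simp
    also have "\<dots> \<le> M * norm u ^ n / fact n"
      using f1 M by (intro divide_left_mono) (auto simp: power2_eq_square)
    finally show "norm (cf d n * u ^ n) \<le> M * (inverse (fact n) * norm u ^ n)"
      by (simp add: field_simps)
  qed
qed

lemma ser_sums:
  assumes "\<And>k. norm (d k) \<le> M * 4^k"
  shows "(\<lambda>k. (-1) ^ k * (z / 2) ^ (2 * k) / (of_nat (fact k)) ^ 2 * d k) sums ser d z"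
  unfolding ser_def term_eq using cf_summable[OF assms] by (simp add: summable_sums)

lemma ser_eq: "ser d z = (\<Sum>k. cf d k * (z^2)^k)"
  unfolding ser_def term_eq ..

lemma ser_holo:
  assumes "\<And>k. norm (d k) \<le> M * 4^k"
  shows "ser d holomorphic_on UNIV"
proof -
  have "(\<lambda>u. \<Sum>k. cf d k * u^k) holomorphic_on UNIV"
    unfolding holomorphic_on_def field_differentiable_def
    using termdiffs_strong_converges_everywhere[OF cf_summable[OF assms]] by blast
  then have "((\<lambda>u. \<Sum>k. cf d k * u^k) \<circ> (\<lambda>z. z^2)) holomorphic_on UNIV"
    by (intro holomorphic_on_compose holomorphic_intros) (auto intro: holomorphic_on_subset)
  then show ?thesis by (simp add: o_def ser_eq[abs_def])
qed

lemma nat_sq_le: "real (k+1)^2 \<le> 4^k"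
proof -
  have "k + 1 \<le> (2::nat)^k" using less_exp[of k] by (simp add: Suc_leI)
  then have "real (k+1) \<le> 2^k" by (metis of_nat_le_iff of_nat_numeral of_nat_power)
  then have "real (k+1)^2 \<le> (2^k)^2" by (intro power_mono) auto
  also have "\<dots> = 4^k" by (simp add: power2_eq_square flip: power_mult_distrib)
  finally show ?thesis .
qed

lemma digamma_bd: "norm (Digamma (of_nat (k+1) :: complex)) \<le> norm (Digamma (1::complex)) + k"
proof (induction k)
  case 0 then show ?case by simp
next
  case (Suc k)
  have nz: "(of_nat (k+1) :: complex) \<noteq> 0" by (simp del: of_nat_Suc)
  have "Digamma (of_nat (Suc k + 1) :: complex) = Digamma (of_nat (k+1)) + 1 / of_nat (k+1)"
    using Digamma_plus1[OF nz] by simp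
  also have "norm \<dots> \<le> norm (Digamma (of_nat (k+1) :: complex)) + norm (1 / (of_nat (k+1) :: complex))"
    by (rule norm_triangle_ineq)
  also have "norm (1 / (of_nat (k+1) :: complex)) \<le> 1"
    by (simp add: norm_divide del: of_nat_Suc)
  finally show ?case using Suc by simp
qed

lemma polygamma_bd: "norm (Polygamma 1 (of_nat (k+1) :: complex)) \<le> norm (Polygamma 1 (1::complex)) + k"
proof (induction k)
  case 0 then show ?case by simp
next
  case (Suc k)
  have nz: "(of_nat (k+1) :: complex) \<noteq> 0" by (simp del: of_nat_Suc)
  have "Polygamma 1 (of_nat (Suc k + 1) :: complex) = Polygamma 1 (of_nat (k+1)) + (-1)^1 * fact 1 / (of_nat (k+1))^Suc 1"
    using Polygamma_plus1[OF nz, of 1] by simp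
  also have "norm \<dots> \<le> norm (Polygamma 1 (of_nat (k+1) :: complex)) + norm ((-1)^1 * fact 1 / (of_nat (k+1) :: complex)^Suc 1)"
    by (rule norm_triangle_ineq)
  also have "norm ((-1)^1 * fact 1 / (of_nat (k+1) :: complex)^Suc 1) \<le> 1"
  proof -
    have "real (Suc 0) \<le> real (Suc k) * real (Suc k)"
      by (simp only: of_nat_mult[symmetric] of_nat_le_iff) simp
    then show ?thesis by (simp add: norm_divide norm_mult del: of_nat_Suc)
  qed
  finally show ?case using Suc by simp
qed



lemma alg:
  fixes l S1 SB SC P Q s m pi :: complex
  assumes "Q \<noteq> 0" "pi \<noteq> 0"
  shows "P + s * ((1/2) * ((l - m*pi*\<i>)^2*S1 - 2*(l - m*pi*\<i>)*SB + SC)) / Q =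
     P + s * ((1/2) * (l^2 * S1 - 2 * l * SB + SC)) / Q
     + s * (- m * pi ^ 2 * (m + 1) / 4) / Q * (S1 + \<i> * ((2/pi) * (l * S1 - SB)))
     + s * (- m * pi ^ 2 * (m - 1) / 4) / Q * (S1 - \<i> * ((2/pi) * (l * S1 - SB)))"
  using assms by (simp add: field_simps power2_eq_square)

lemma open_strip: "open {w::complex. \<bar>Im w\<bar> < pi}"
  by (intro open_Collect_less continuous_intros)


definition dB :: "nat \<Rightarrow> complex" where "dB k = Digamma (of_nat (k+1))"
definition dC :: "nat \<Rightarrow> complex" where
  "dC k = (Digamma (of_nat (k + 1))) ^ 2 - (1/2) * Polygamma 1 (of_nat (k + 1)) + (complex_of_real pi) ^ 2 / 4"

lemma d1_bd: "norm ((\<lambda>_. 1::complex) k) \<le> 1 * 4^k"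
  by simp

lemma dB_bd: "norm (dB k) \<le> (norm (Digamma (1::complex)) + 1) * 4^k"
proof -
  let ?D = "norm (Digamma (1::complex))"
  have "real (k+1) * 1 \<le> real (k+1) * real (k+1)" by (intro mult_left_mono) auto
  then have X: "real (k+1) \<le> 4^k" using nat_sq_le[of k]
    by (simp only: power2_eq_square mult_1_right)
  have "norm (dB k) \<le> ?D + k" unfolding dB_def by (rule digamma_bd)
  also have "\<dots> \<le> (?D + 1) * real (k+1)" by (simp add: algebra_simps)
  also have "\<dots> \<le> (?D + 1) * 4^k" by (intro mult_left_mono X) auto
  finally show ?thesis .
qed


lemma aux_lin: fixes a x :: real
  assumes "0 \<le> a" "0 \<le> x" shows "1/2*(a+x) \<le> (a+1)*(x+1)"
proof -
  have "0 \<le> a * x" using assms by simp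
  have "(a+1)*(x+1) = a*x + a + x + 1" by (simp add: algebra_simps)
  then show ?thesis using assms \<open>0 \<le> a * x\<close> by (simp add: field_simps)
qed

lemma dC_bd: "norm (dC k) \<le> ((norm (Digamma (1::complex)) + 1)^2 + norm (Polygamma 1 (1::complex)) + 1 + pi^2) * 4^k"
proof -
  let ?D = "norm (Digamma (1::complex))" and ?P = "norm (Polygamma 1 (1::complex))"
  define X where "X = real k + 1"
  have X1: "1 \<le> X" unfolding X_def by simp
  have X4: "X^2 \<le> 4^k" using nat_sq_le[of k] unfolding X_def by (simp add: add.commute)
  have D: "norm (Digamma (of_nat (k+1) :: complex)) \<le> ?D + k" by (rule digamma_bd)
  have P: "norm (Polygamma 1 (of_nat (k+1) :: complex)) \<le> ?P + k" by (rule polygamma_bd)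
  have D0: "0 \<le> ?D" and P0: "0 \<le> ?P" by auto
  have "norm (dC k) \<le> norm (Digamma (of_nat (k + 1) :: complex)) ^ 2
          + (1/2) * norm (Polygamma 1 (of_nat (k + 1) :: complex)) + pi^2/4"
  proof -
    let ?a = "(Digamma (of_nat (k + 1) :: complex))^2" and ?b = "(1/2) * Polygamma 1 (of_nat (k + 1) :: complex)"
      and ?c = "(complex_of_real pi) ^ 2 / 4"
    have "norm (?a - ?b + ?c) \<le> norm (?a - ?b) + norm ?c" by (rule norm_triangle_ineq)
    also have "norm (?a - ?b) \<le> norm ?a + norm ?b" by (rule norm_triangle_ineq4)
    finally have "norm (?a - ?b + ?c) \<le> norm ?a + norm ?b + norm ?c" by simp
    then show ?thesis unfolding dC_def by (simp add: norm_power norm_mult)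
  qed
  also have "\<dots> \<le> (?D + k)^2 + (1/2) * (?P + k) + pi^2/4"
    using D P by (intro add_mono power_mono mult_left_mono) auto
  also have "\<dots> \<le> ((?D + 1)^2 + ?P + 1 + pi^2) * X^2"
  proof -
    have a: "?D + k \<le> (?D + 1) * X" using D0 X1 unfolding X_def by (simp add: algebra_simps)
    have "(?D + k)^2 \<le> ((?D + 1) * X)^2" using a by (intro power_mono) auto
    moreover have "(1/2) * (?P + k) \<le> (?P + 1) * X^2"
    proof -
      have "(1/2) * (?P + k) \<le> (?P + 1) * X" unfolding X_def by (rule aux_lin) auto
      also have "\<dots> \<le> (?P + 1) * X^2" using P0 X1
        by (intro mult_left_mono) (auto simp: power2_eq_square)
      finally show ?thesis .
    qed
    moreover have "pi^2/4 \<le> pi^2 * X^2"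
    proof -
      have "1 \<le> X^2" using X1 by (rule one_le_power)
      then have "pi^2 * 1 \<le> pi^2 * X^2" by (intro mult_left_mono) auto
      moreover have "pi^2/4 \<le> pi^2" by simp
      ultimately show ?thesis by linarith
    qed
    moreover have "((?D + 1) * X)^2 = (?D + 1)^2 * X^2" by (rule power_mult_distrib)
    moreover have "((?D + 1)^2 + ?P + 1 + pi^2) * X^2 = (?D + 1)^2 * X^2 + (?P + 1) * X^2 + pi^2 * X^2"
      by (simp only: distrib_right)
    ultimately show ?thesis by linarith
  qed
  also have "\<dots> \<le> ((?D + 1)^2 + ?P + 1 + pi^2) * 4^k"
    using X4 D0 P0 by (intro mult_left_mono) auto
  finally show ?thesis .
qed

lemma ser_sq: "z^2 = y^2 \<Longrightarrow> ser d z = ser d y"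
  by (simp add: ser_eq)

lemma lin_sum:
  "(1/2) * (\<Sum>k. (-1) ^ k * (z / 2) ^ (2 * k) / (of_nat (fact k)) ^ 2
      * ((l - Digamma (of_nat (k + 1))) ^ 2
         - (1/2) * Polygamma 1 (of_nat (k + 1)) + (complex_of_real pi) ^ 2 / 4))
   = (1/2) * (l^2 * ser (\<lambda>_. 1) z - 2 * l * ser dB z + ser dC z)"
proof -
  let ?a = "\<lambda>k. (-1) ^ k * (z / 2) ^ (2 * k) / (of_nat (fact k)) ^ 2 :: complex"
  have s1: "(\<lambda>k. ?a k * 1) sums ser (\<lambda>_. 1) z" by (rule ser_sums[OF d1_bd])
  have s2: "(\<lambda>k. ?a k * dB k) sums ser dB z" by (rule ser_sums[OF dB_bd])
  have s3: "(\<lambda>k. ?a k * dC k) sums ser dC z" by (rule ser_sums[OF dC_bd])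
  have "(\<lambda>k. l^2 * (?a k * 1) - 2 * l * (?a k * dB k) + ?a k * dC k) sums
          (l^2 * ser (\<lambda>_. 1) z - 2 * l * ser dB z + ser dC z)"
    by (intro sums_add sums_diff sums_mult s1 s2 s3)
  moreover have "(\<lambda>k. l^2 * (?a k * 1) - 2 * l * (?a k * dB k) + ?a k * dC k) =
     (\<lambda>k. ?a k * ((l - Digamma (of_nat (k + 1))) ^ 2
         - (1/2) * Polygamma 1 (of_nat (k + 1)) + (complex_of_real pi) ^ 2 / 4))"
    by (rule ext) (simp add: dB_def dC_def algebra_simps power2_eq_square)
  ultimately show ?thesis by (simp add: sums_iff)
qed

lemma lommel_m1_eq: "lommelS_m1 z = (1/2) * (Ln (z/2)^2 * ser (\<lambda>_. 1) z - 2 * Ln (z/2) * ser dB z + ser dC z)"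
  unfolding lommelS_m1_def by (rule lin_sum)

lemma J_eq: "besselJ0 z = ser (\<lambda>_. 1) z"
  unfolding besselJ0_def ser_def by simp

lemma Y_eq: "besselY0 z = (2 / complex_of_real pi) * (Ln (z/2) * ser (\<lambda>_. 1) z - ser dB z)"
proof -
  let ?a = "\<lambda>k. (-1) ^ k * (z / 2) ^ (2 * k) / (of_nat (fact k)) ^ 2 :: complex"
  have s1: "(\<lambda>k. ?a k * 1) sums ser (\<lambda>_. 1) z" by (rule ser_sums[OF d1_bd])
  have s2: "(\<lambda>k. ?a k * dB k) sums ser dB z" by (rule ser_sums[OF dB_bd])
  have "(\<lambda>k. Ln (z/2) * (?a k * 1) - ?a k * dB k) sums (Ln (z/2) * ser (\<lambda>_. 1) z - ser dB z)"
    by (intro sums_diff sums_mult s1 s2)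
  moreover have "(\<lambda>k. Ln (z/2) * (?a k * 1) - ?a k * dB k) =
      (\<lambda>k. ?a k * (Ln (z / 2) - Digamma (of_nat (k + 1))))"
    by (rule ext) (simp add: dB_def field_simps)
  ultimately show ?thesis unfolding besselY0_def by (simp add: sums_iff)
qed

definition polyp :: "nat \<Rightarrow> complex \<Rightarrow> complex" where
  "polyp p z = (\<Sum>j<p. (-1) ^ j * z powi (2 * int j - 2 * int p)
          / (2 ^ (2 * j + 2) * pochhammer (- of_nat p) (j + 1) * pochhammer (- of_nat p) (j + 1)))"

lemma powi_even: "(z::complex) powi (2 * int j - 2 * int p) = (z^2) powi (int j - int p)"
proof -
  have "2 * int j - 2 * int p = 2 * (int j - int p)" by simp
  moreover have "z powi (2 * (int j - int p)) = (z powi 2) powi (int j - int p)" by (rule power_int_mult)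
  moreover have "z powi 2 = z^2" by simp
  ultimately show ?thesis by simp
qed

lemma polyp_sq: "z^2 = y^2 \<Longrightarrow> polyp p z = polyp p y"
  unfolding polyp_def powi_even by simp

lemma lommelS_eq: "lommelS p z = polyp p z + (-1) ^ p * lommelS_m1 z / (2 ^ (2 * p) * (of_nat (fact p)) ^ 2)"
  unfolding lommelS_def polyp_def ..

definition GG :: "nat \<Rightarrow> complex \<Rightarrow> complex" where
  "GG p w = polyp p (exp w) + (-1) ^ p * ((1/2) * ((w - of_real (ln 2))^2 * ser (\<lambda>_. 1) (exp w)
     - 2 * (w - of_real (ln 2)) * ser dB (exp w) + ser dC (exp w))) / (2 ^ (2 * p) * (of_nat (fact p)) ^ 2)"

lemma GG_holo: "GG p holomorphic_on UNIV"
proof -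
  have h1: "ser (\<lambda>_. 1) holomorphic_on UNIV" by (rule ser_holo[OF d1_bd])
  have h2: "ser dB holomorphic_on UNIV" by (rule ser_holo[OF dB_bd])
  have h3: "ser dC holomorphic_on UNIV" by (rule ser_holo[OF dC_bd])
  have c1: "(\<lambda>w. ser (\<lambda>_. 1) (exp w)) holomorphic_on UNIV"
    using holomorphic_on_compose[OF holomorphic_on_exp h1[THEN holomorphic_on_subset]] by (auto simp: o_def)
  have c2: "(\<lambda>w. ser dB (exp w)) holomorphic_on UNIV"
    using holomorphic_on_compose[OF holomorphic_on_exp h2[THEN holomorphic_on_subset]] by (auto simp: o_def)
  have c3: "(\<lambda>w. ser dC (exp w)) holomorphic_on UNIV"
    using holomorphic_on_compose[OF holomorphic_on_exp h3[THEN holomorphic_on_subset]] by (auto simp: o_def)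
  have c0: "(\<lambda>w. polyp p (exp w)) holomorphic_on UNIV"
    unfolding polyp_def
    by (intro holomorphic_intros holomorphic_on_power_int) auto
  show ?thesis unfolding GG_def
    by (intro holomorphic_intros c0 c1 c2 c3) auto
qed

lemma Ln_half: assumes "\<bar>Im w\<bar> < pi" shows "Ln (exp w / 2) = w - of_real (ln 2)"
proof -
  have "exp w / 2 = exp (w - of_real (ln 2))"
    by (simp add: exp_diff exp_of_real)
  then show ?thesis using assms by (simp add: Ln_exp)
qed

lemma GG_cont: "log_continuation (lommelS p) (GG p)"
  unfolding log_continuation_def
proof (intro conjI allI impI GG_holo)
  fix w :: complex assume w: "\<bar>Im w\<bar> < pi"
  show "GG p w = lommelS p (exp w)"
    unfolding GG_def lommelS_eq lommel_m1_eq Ln_half[OF w] ..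
qed

lemma exp_shift_sq: "exp (w - of_int m * complex_of_real pi * \<i>)^2 = exp w ^ 2"
proof -
  have "exp (w - of_int m * complex_of_real pi * \<i>)^2 = exp (2*w) / exp (2 * of_int m * complex_of_real pi * \<i>)"
    by (simp add: exp_diff power2_eq_square flip: exp_add) (simp add: algebra_simps)
  also have "exp (2 * of_int m * complex_of_real pi * \<i>) = 1"
  proof -
    have "exp (2 * of_int m * complex_of_real pi * \<i>) = exp (2 * complex_of_real pi * \<i>) powi m"
      by (simp add: exp_power_int mult_ac)
    then show ?thesis by (simp add: exp_two_pi_i)
  qed
  finally show ?thesis by (simp add: power2_eq_square flip: exp_add)
qed

theorem lemma3p8:
  fixes p :: nat and m :: int and \<zeta> :: complex
  assumes "\<zeta> \<noteq> 0" and "- pi < Arg \<zeta>" and "Arg \<zeta> < pi"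
  shows "(\<exists>F. log_continuation (lommelS p) F) \<and>
    (\<forall>F. log_continuation (lommelS p) F \<longrightarrow>
       F (Ln \<zeta> - of_int m * complex_of_real pi * \<i>) =
         lommelS p \<zeta>
         + (-1) ^ p * (- of_int m * complex_of_real pi ^ 2 * (of_int m + 1) / 4)
             / (2 ^ (2 * p) * (of_nat (fact p)) ^ 2) * hankel1_0 \<zeta>
         + (-1) ^ p * (- of_int m * complex_of_real pi ^ 2 * (of_int m - 1) / 4)
             / (2 ^ (2 * p) * (of_nat (fact p)) ^ 2) * hankel2_0 \<zeta>)"
proof (intro conjI allI impI)
  show "\<exists>F. log_continuation (lommelS p) F" using GG_cont by blast
next
  fix F assume F: "log_continuation (lommelS p) F"
  let ?w = "Ln \<zeta> - of_int m * complex_of_real pi * \<i>"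
  have FG: "F ?w = GG p ?w"
  proof (rule analytic_continuation_open[where s="{w. \<bar>Im w\<bar> < pi}" and s'=UNIV and f=F and g="GG p" and z="?w"])
    show "open {w::complex. \<bar>Im w\<bar> < pi}" by (intro open_Collect_less continuous_intros)
    show "{w::complex. \<bar>Im w\<bar> < pi} \<noteq> {}" proof - have "(0::complex) \<in> {w. \<bar>Im w\<bar> < pi}" by simp then show ?thesis by blast qed
    show "F holomorphic_on UNIV" using F by (simp add: log_continuation_def)
    show "GG p holomorphic_on UNIV" by (rule GG_holo)
    fix z :: complex assume "z \<in> {w. \<bar>Im w\<bar> < pi}"
    then show "F z = GG p z" using F GG_cont[of p] by (simp add: log_continuation_def)
  qed auto
  have im: "\<bar>Im (Ln \<zeta>)\<bar> < pi" using assms by (simp add: Arg_def abs_less_iff)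
  have ez: "exp (Ln \<zeta>) = \<zeta>" using assms by simp
  have sq: "exp ?w ^ 2 = \<zeta>^2" using exp_shift_sq[of "Ln \<zeta>" m] ez by simp
  have Lh: "Ln (\<zeta>/2) = Ln \<zeta> - of_real (ln 2)" using Ln_half[OF im] ez by simp
  have "GG p ?w = polyp p \<zeta> + (-1) ^ p * ((1/2) * ((Ln (\<zeta>/2) - of_int m * complex_of_real pi * \<i>)^2 * ser (\<lambda>_. 1) \<zeta>
     - 2 * (Ln (\<zeta>/2) - of_int m * complex_of_real pi * \<i>) * ser dB \<zeta> + ser dC \<zeta>)) / (2 ^ (2 * p) * (of_nat (fact p)) ^ 2)"
    unfolding GG_def polyp_sq[OF sq] ser_sq[OF sq, of "\<lambda>_. 1"] ser_sq[OF sq, of dB] ser_sq[OF sq, of dC] Lh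
    by (simp add: algebra_simps)
  also have "\<dots> = lommelS p \<zeta>
         + (-1) ^ p * (- of_int m * complex_of_real pi ^ 2 * (of_int m + 1) / 4)
             / (2 ^ (2 * p) * (of_nat (fact p)) ^ 2) * hankel1_0 \<zeta>
         + (-1) ^ p * (- of_int m * complex_of_real pi ^ 2 * (of_int m - 1) / 4)
             / (2 ^ (2 * p) * (of_nat (fact p)) ^ 2) * hankel2_0 \<zeta>"
    unfolding lommelS_eq lommel_m1_eq hankel1_0_def hankel2_0_def J_eq Y_eq
    by (rule alg) auto
  finally show "F ?w = \<dots>" using FG by simp
qed

end
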